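(* Let $F:\mathbb{R}^N\times\mathbb{R}\times\mathbb{R}^N\times S^N\to\mathbb{R}$ be continuous and uniformly elliptic: there are $0<\lambda\le\Lambda$ with $\lambda\,\mathrm{tr}(Q)\le F(x,t,p,X)-F(x,t,p,X+Q)\le\Lambda\,\mathrm{tr}(Q)$ for all $x,p,t,X$ and all $Q\in S^N$, $Q\ge0$. Let $A$ be a metric space and $b:\mathbb{R}^N\times A\to\mathbb{R}^N$, $c:\mathbb{R}^N\times A\to\mathbb{R}$ continuous, such that for every $R>0$ there is $K_R$ with $\sup_{|x|\le R,\alpha}(|b|+|c|)\le K_R$ and $|b(x,\alpha)-b(y,\alpha)|\le K_R|x-y|$ for $|x|,|y|\le R$; $c\ge0$ and $c$ continuous in $x$ uniformly in $|x|\le R,\alpha$; and for some $R_o>0$, $\sup_\alpha(b(x,\alpha)\cdot x-c(x,\alpha)|x|^2\log|x|)\le\lambda-(N-1)\Lambda$ for $|x|\ge R_o$. Assume $F(x,t,p,0)\ge\inf_{\alpha\in A}\{c(x,\alpha)t-b(x,\alpha)\cdot p\}$ for all $x,t,p$. Let $u\in USC(\mathbb{R}^N)$ be a viscosity subsolution of $F(x,u,Du,D^2u)=0$ in $\mathbb{R}^N$ with $\limsup_{|x|\to\infty}u(x)/\log|x|\le0$. If either $c\equiv0$ or $u\ge0$, then $u$ is constant.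
   Context: $S^N$ is the space of real symmetric $N\times N$ matrices. *)

theory Defs
  imports "HOL-Analysis.Analysis"
begin

definition symmetric_mat :: "real^'n^'n \<Rightarrow> bool" where
  "symmetric_mat X \<longleftrightarrow> transpose X = X"

definition psd_mat :: "real^'n^'n \<Rightarrow> bool" where
  "psd_mat Q \<longleftrightarrow> symmetric_mat Q \<and> (\<forall>v. 0 \<le> v \<bullet> (Q *v v))"

definition usc :: "(real^'n \<Rightarrow> real) \<Rightarrow> bool" where
  "usc u \<longleftrightarrow> (\<forall>x. \<forall>e>0. eventually (\<lambda>y. u y < u x + e) (at x))"

definition C2_fun :: "(real^'n \<Rightarrow> real) \<Rightarrow> (real^'n \<Rightarrow> real^'n) \<Rightarrow> (real^'n \<Rightarrow> real^'n^'n) \<Rightarrow> bool" where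
  "C2_fun phi Dphi D2phi \<longleftrightarrow>
     (\<forall>x. (phi has_derivative (\<lambda>h. Dphi x \<bullet> h)) (at x)) \<and>
     (\<forall>x. (Dphi has_derivative (\<lambda>h. D2phi x *v h)) (at x)) \<and>
     continuous_on UNIV D2phi"

definition viscosity_subsolution ::
  "(real^'n \<Rightarrow> real \<Rightarrow> real^'n \<Rightarrow> real^'n^'n \<Rightarrow> real) \<Rightarrow> (real^'n \<Rightarrow> real) \<Rightarrow> bool" where
  "viscosity_subsolution F u \<longleftrightarrow> usc u \<and>
     (\<forall>phi Dphi D2phi x0. C2_fun phi Dphi D2phi \<longrightarrow>
        (\<exists>r>0. \<forall>y\<in>ball x0 r. u y - phi y \<le> u x0 - phi x0) \<longrightarrow>
        F x0 (u x0) (Dphi x0) (D2phi x0) \<le> 0)"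

end

theory Submission
  imports Defs
begin


definition outer :: "real^'n \<Rightarrow> real^'n \<Rightarrow> real^'n^'n" where
  "outer x y = (\<chi> i j. x$i * y$j)"

lemma outer_mult: "outer x x *v h = (x \<bullet> h) *\<^sub>R x"
  by (simp add: outer_def vec_eq_iff matrix_vector_mult_def inner_vec_def sum_distrib_left algebra_simps)

lemma outer_sym: "symmetric_mat (outer x x)"
  by (simp add: symmetric_mat_def outer_def transpose_def vec_eq_iff mult.commute)

lemma trace_outer: "trace (outer x x) = x \<bullet> x"
  by (simp add: trace_def outer_def inner_vec_def)

lemma quad_outer: "v \<bullet> (outer x x *v v) = (x \<bullet> v)^2"
  by (simp add: outer_mult power2_eq_square inner_commute)

lemma mat_mult_lin: fixes A B :: "real^'n^'n" shows "((a::real) *\<^sub>R A + b *\<^sub>R B) *v h = a *\<^sub>R (A *v h) + b *\<^sub>R (B *v h)"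
  by (simp add: matrix_vector_mult_add_rdistrib flip: scaleR_matrix_vector_assoc)

lemma mat1_mult: "(mat 1 :: real^'n^'n) *v h = h"
  by simp

lemma usc_attains_max:
  fixes f :: "'a::topological_space \<Rightarrow> real"
  assumes usc: "\<And>x e. e > 0 \<Longrightarrow> eventually (\<lambda>y. f y < f x + e) (at x)"
    and K: "compact K" "K \<noteq> {}"
  shows "\<exists>x\<in>K. \<forall>y\<in>K. f y \<le> f x"
proof -
  have nb: "\<exists>T. open T \<and> x \<in> T \<and> (\<forall>y\<in>T. f y < f x + e)" if "e > 0" for x e
  proof -
    from usc[OF that, of x] obtain S where "open S" "x \<in> S" "\<forall>y\<in>S. y \<noteq> x \<longrightarrow> f y < f x + e"
      unfolding eventually_at_topological by blast
    then show ?thesis using that by (intro exI[of _ S]) auto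
  qed
  define T where "T x e = (SOME T. open T \<and> x \<in> T \<and> (\<forall>y\<in>T. f y < f x + e))" for x e
  have T: "open (T x e) \<and> x \<in> T x e \<and> (\<forall>y\<in>T x e. f y < f x + e)" if "e > 0" for x e
    unfolding T_def using someI_ex[OF nb[OF that]] .
  have "K \<subseteq> (\<Union>x\<in>K. T x 1)" using T[of 1] by auto
  then obtain D where D: "D \<subseteq> K" "finite D" "K \<subseteq> (\<Union>x\<in>D. T x 1)"
    using compactE_image[OF K(1), of K "\<lambda>x. T x 1"] T[of 1] by auto
  have bdd: "bdd_above (f ` K)"
  proof
    fix z assume "z \<in> f ` K"
    then obtain y where y: "y \<in> K" "z = f y" by auto
    then obtain x where "x \<in> D" "y \<in> T x 1" using D by auto
    then have "f y \<le> f x + 1" using T[of 1 x] by auto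
    also have "\<dots> \<le> Max ((\<lambda>x. f x + 1) ` D)" using \<open>x \<in> D\<close> D(2) by auto
    finally show "z \<le> Max ((\<lambda>x. f x + 1) ` D)" using y by simp
  qed
  define S where "S = Sup (f ` K)"
  show ?thesis
  proof (rule ccontr)
    assume "\<not> ?thesis"
    then have lt: "\<forall>y\<in>K. f y < S"
      unfolding S_def using bdd by (metis cSUP_upper le_less not_le)
    define e where "e x = (S - f x) / 2" for x
    have "K \<subseteq> (\<Union>x\<in>K. T x (e x))" using T lt unfolding e_def by auto
    then obtain D where D: "D \<subseteq> K" "finite D" "K \<subseteq> (\<Union>x\<in>D. T x (e x))"
      using compactE_image[OF K(1), of K "\<lambda>x. T x (e x)"] T lt unfolding e_def by auto
    have "D \<noteq> {}" using D K(2) by auto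
    define B where "B = Max ((\<lambda>x. f x + e x) ` D)"
    have "B \<in> (\<lambda>x. f x + e x) ` D" unfolding B_def using D(2) \<open>D \<noteq> {}\<close> by (intro Max_in) auto
    then obtain x0 where "x0 \<in> D" "B = f x0 + e x0" by auto
    moreover have "f x0 < S" using lt D(1) \<open>x0 \<in> D\<close> by auto
    ultimately have "B < S" unfolding e_def by (simp add: field_simps)
    have "S \<le> B" unfolding S_def
    proof (rule cSUP_least[OF K(2)])
      fix y assume "y \<in> K"
      then obtain x where x: "x \<in> D" "y \<in> T x (e x)" using D by auto
      then have "f y < f x + e x" using T[of "e x" x] lt D(1) unfolding e_def by auto
      also have "\<dots> \<le> B" unfolding B_def using x D(2) by auto
      finally show "f y \<le> B" by simp
    qed
    then show False using \<open>B < S\<close> by simp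
  qed
qed



lemma radial_C2:
  fixes y :: "real^'n" and g g1 g2 :: "real \<Rightarrow> real"
  assumes d1: "\<And>s. s \<ge> 0 \<Longrightarrow> (g has_real_derivative g1 s) (at s)"
    and d2: "\<And>s. s \<ge> 0 \<Longrightarrow> (g1 has_real_derivative g2 s) (at s)"
    and c2: "continuous_on {0..} g2"
  shows "C2_fun (\<lambda>x. g ((x-y)\<bullet>(x-y))) (\<lambda>x. (2 * g1 ((x-y)\<bullet>(x-y))) *\<^sub>R (x-y))
     (\<lambda>x. (2 * g1 ((x-y)\<bullet>(x-y))) *\<^sub>R mat 1 + (4 * g2 ((x-y)\<bullet>(x-y))) *\<^sub>R outer (x-y) (x-y))"
proof -
  have q: "((\<lambda>x. (x-y)\<bullet>(x-y)) has_derivative (\<lambda>h. 2 * ((x-y)\<bullet>h))) (at x)" for x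
    by (auto intro!: derivative_eq_intros simp: inner_commute)
  have qn: "(x-y)\<bullet>(x-y) \<ge> 0" for x by simp
  have A1: "((\<lambda>x. g ((x-y)\<bullet>(x-y))) has_derivative (\<lambda>h. (2 * g1 ((x-y)\<bullet>(x-y))) *\<^sub>R (x-y) \<bullet> h)) (at x)" for x
  proof -
    have "((\<lambda>x. g ((x-y)\<bullet>(x-y))) has_derivative (\<lambda>h. g1 ((x-y)\<bullet>(x-y)) * (2 * ((x-y)\<bullet>h)))) (at x)"
      using has_derivative_compose[OF q d1[OF qn, unfolded has_field_derivative_def]] .
    then show ?thesis by (rule has_derivative_eq_rhs) (auto simp: fun_eq_iff algebra_simps)
  qed
  have A2: "((\<lambda>x. (2 * g1 ((x-y)\<bullet>(x-y))) *\<^sub>R (x-y)) has_derivative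
      (\<lambda>h. ((2 * g1 ((x-y)\<bullet>(x-y))) *\<^sub>R mat 1 + (4 * g2 ((x-y)\<bullet>(x-y))) *\<^sub>R outer (x-y) (x-y)) *v h)) (at x)" for x
  proof -
    have g1d: "((\<lambda>x. g1 ((x-y)\<bullet>(x-y))) has_derivative (\<lambda>h. g2 ((x-y)\<bullet>(x-y)) * (2 * ((x-y)\<bullet>h)))) (at x)"
      using has_derivative_compose[OF q d2[OF qn, unfolded has_field_derivative_def]] .
    have "((\<lambda>x. (2 * g1 ((x-y)\<bullet>(x-y))) *\<^sub>R (x-y)) has_derivative
      (\<lambda>h. (2 * g1 ((x-y)\<bullet>(x-y))) *\<^sub>R h + (2 * (g2 ((x-y)\<bullet>(x-y)) * (2 * ((x-y)\<bullet>h)))) *\<^sub>R (x-y))) (at x)"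
      by (auto intro!: derivative_eq_intros g1d)
    then show ?thesis by (rule has_derivative_eq_rhs) (simp add: fun_eq_iff mat_mult_lin outer_mult)
  qed
  have g1c: "continuous_on {0..} g1"
    using d2 by (meson DERIV_isCont atLeast_iff continuous_at_imp_continuous_on)
  have cq: "continuous_on UNIV (\<lambda>x::real^'n. (x-y)\<bullet>(x-y))" by (intro continuous_intros)
  have C1: "continuous_on UNIV (\<lambda>x::real^'n. g1 ((x-y)\<bullet>(x-y)))"
    by (rule continuous_on_compose2[OF g1c cq]) auto
  have C2: "continuous_on UNIV (\<lambda>x::real^'n. g2 ((x-y)\<bullet>(x-y)))"
    by (rule continuous_on_compose2[OF c2 cq]) auto
  have C3: "continuous_on UNIV (\<lambda>x::real^'n. outer (x-y) (x-y))"
    unfolding outer_def by (intro continuous_intros)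
  have "continuous_on UNIV (\<lambda>x. (2 * g1 ((x-y)\<bullet>(x-y))) *\<^sub>R (mat 1::real^'n^'n) + (4 * g2 ((x-y)\<bullet>(x-y))) *\<^sub>R outer (x-y) (x-y))"
    by (intro continuous_intros C1 C2 C3)
  then show ?thesis unfolding C2_fun_def using A1 A2 by blast
qed



lemma sym_comb: "symmetric_mat ((a::real) *\<^sub>R mat 1 + b *\<^sub>R outer z z)"
  by (simp add: symmetric_mat_def transpose_def outer_def mat_def vec_eq_iff mult.commute)

lemma sym_zero: "symmetric_mat (0::real^'n^'n)"
  by (simp add: symmetric_mat_def transpose_def vec_eq_iff)

lemma trace_scale: "trace ((a::real) *\<^sub>R (A::real^'n^'n)) = a * trace A"
  by (simp add: trace_def sum_distrib_left)

lemma pucci: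
  fixes F :: "real^'n \<Rightarrow> real \<Rightarrow> real^'n \<Rightarrow> real^'n^'n \<Rightarrow> real"
  assumes ellip: "\<And>x t p X Q. symmetric_mat X \<Longrightarrow> psd_mat Q \<Longrightarrow>
                   lam * trace Q \<le> F x t p X - F x t p (X + Q) \<and>
                   F x t p X - F x t p (X + Q) \<le> Lam * trace Q"
    and X: "symmetric_mat X" and P: "psd_mat Xp" and M: "psd_mat Xm" and eq: "X = Xp - Xm"
  shows "F x t p X \<ge> F x t p 0 - Lam * trace Xp + lam * trace Xm"
proof -
  have "lam * trace Xm \<le> F x t p X - F x t p (X + Xm)" using ellip[OF X M] by blast
  moreover have "X + Xm = Xp" using eq by simp
  moreover have "F x t p 0 - F x t p (0 + Xp) \<le> Lam * trace Xp" using ellip[OF sym_zero P] by blast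
  ultimately show ?thesis by simp
qed

lemma radial_pucci:
  fixes F :: "real^'n \<Rightarrow> real \<Rightarrow> real^'n \<Rightarrow> real^'n^'n \<Rightarrow> real"
  assumes ellip: "\<And>x t p X Q. symmetric_mat X \<Longrightarrow> psd_mat Q \<Longrightarrow>
                   lam * trace Q \<le> F x t p X - F x t p (X + Q) \<and>
                   F x t p X - F x t p (X + Q) \<le> Lam * trace Q"
    and s: "z \<bullet> z > 0" and a: "a \<ge> 0" and ab: "a + b * (z \<bullet> z) \<le> 0"
  shows "F x t p (a *\<^sub>R mat 1 + b *\<^sub>R outer z z) \<ge>
           F x t p 0 - Lam * a * (real CARD('n) - 1) - lam * (a + b * (z \<bullet> z))"
proof -
  define s where "s = z \<bullet> z"
  define Xp where "Xp = a *\<^sub>R (mat 1 - (1/s) *\<^sub>R outer z z)"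
  define Xm where "Xm = (- (a + b * s) / s) *\<^sub>R outer z z"
  have s0: "s > 0" using s unfolding s_def .
  have eq: "a *\<^sub>R mat 1 + b *\<^sub>R outer z z = Xp - Xm"
    unfolding Xp_def Xm_def using s0
    by (simp add: vec_eq_iff outer_def mat_def field_simps)
  have symP: "symmetric_mat Xp"
    unfolding Xp_def by (simp add: symmetric_mat_def transpose_def outer_def mat_def vec_eq_iff mult.commute)
  have symM: "symmetric_mat Xm"
    unfolding Xm_def by (simp add: symmetric_mat_def transpose_def outer_def vec_eq_iff mult.commute)
  have "0 \<le> v \<bullet> (Xp *v v)" for v
  proof -
    have cs: "(z \<bullet> v)^2 \<le> s * (v \<bullet> v)" unfolding s_def by (rule Cauchy_Schwarz_ineq)
    have "Xp *v v = a *\<^sub>R (v - ((1/s) * (z \<bullet> v)) *\<^sub>R z)"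
      unfolding Xp_def by (simp add: outer_mult scaleR_matrix_vector_assoc[symmetric] matrix_vector_mult_diff_rdistrib)
    then have "v \<bullet> (Xp *v v) = a * (v \<bullet> v - (z \<bullet> v)^2 / s)"
      by (simp add: inner_diff_right power2_eq_square inner_commute)
    moreover have "(z \<bullet> v)^2 / s \<le> v \<bullet> v" using cs s0 by (simp add: field_simps)
    ultimately show ?thesis using a by simp
  qed
  then have P: "psd_mat Xp" using symP unfolding psd_mat_def by blast
  have "0 \<le> v \<bullet> (Xm *v v)" for v
  proof -
    have "v \<bullet> (Xm *v v) = (- (a + b * s) / s) * (z \<bullet> v)^2"
      unfolding Xm_def by (simp add: scaleR_matrix_vector_assoc[symmetric] quad_outer)
    moreover have "- (a + b * s) / s \<ge> 0" using ab s0 unfolding s_def by simp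
    ultimately show ?thesis by (metis mult_nonneg_nonneg zero_le_power2)
  qed
  then have M: "psd_mat Xm" using symM unfolding psd_mat_def by blast
  have tP: "trace Xp = a * (real CARD('n) - 1)"
    unfolding Xp_def using s0 by (simp add: trace_scale trace_sub trace_I trace_outer s_def)
  have tM: "trace Xm = - (a + b * s)"
    unfolding Xm_def using s0 by (simp add: trace_scale trace_outer s_def)
  have H: "F x t p (a *\<^sub>R mat 1 + b *\<^sub>R outer z z) \<ge> F x t p 0 - Lam * trace Xp + lam * trace Xm"
    by (rule pucci[of lam F Lam]) (rule ellip, assumption+, rule sym_comb, rule P, rule M, rule eq)
  show ?thesis
    using H tP tM unfolding s_def by (simp add: algebra_simps)
qed



lemma usc_add_cont:
  fixes u h :: "real^'n \<Rightarrow> real"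
  assumes "usc u" "continuous_on UNIV h" "e > 0"
  shows "eventually (\<lambda>y. u y + h y < u x + h x + e) (at x)"
proof -
  have "eventually (\<lambda>y. u y < u x + e/2) (at x)" using assms(1,3) unfolding usc_def by simp
  moreover have "isCont h x" using assms(2) by (simp add: continuous_on_eq_continuous_at)
  then have "eventually (\<lambda>y. dist (h y) (h x) < e/2) (at x)"
    using assms(3) by (intro tendstoD) (auto simp: isCont_def)
  ultimately show ?thesis
    by eventually_elim (unfold dist_real_def abs_less_iff, linarith)
qed

lemma open_below:
  assumes "usc u"
  shows "open {x. u x < M}"
proof (subst open_subopen, intro ballI)
  fix x assume "x \<in> {x. u x < M}"
  then have "M - u x > 0" by simp
  with assms have "eventually (\<lambda>y. u y < u x + (M - u x)) (at x)" unfolding usc_def by blast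
  then obtain S where "open S" "x \<in> S" "\<forall>y\<in>S. y \<noteq> x \<longrightarrow> u y < u x + (M - u x)"
    unfolding eventually_at_topological by blast
  then show "\<exists>T. open T \<and> x \<in> T \<and> T \<subseteq> {x. u x < M}"
    using \<open>x \<in> {x. u x < M}\<close> by (intro exI[of _ S]) auto
qed

lemma drift:
  fixes F :: "real^'n \<Rightarrow> real \<Rightarrow> real^'n \<Rightarrow> real^'n^'n \<Rightarrow> real"
  assumes F_inf: "ereal (F x t p 0) \<ge> (INF \<alpha>. ereal (c x \<alpha> * t - b x \<alpha> \<bullet> p))"
    and lb: "\<And>\<alpha>. c x \<alpha> * t - b x \<alpha> \<bullet> p \<ge> beta"
  shows "F x t p 0 \<ge> beta"
proof -
  have "ereal beta \<le> (INF \<alpha>. ereal (c x \<alpha> * t - b x \<alpha> \<bullet> p))"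
    by (rule INF_greatest) (simp add: lb)
  then have "ereal beta \<le> ereal (F x t p 0)" using F_inf by (rule order_trans)
  then show ?thesis by simp
qed



lemma smp:
  fixes F :: "real^'n \<Rightarrow> real \<Rightarrow> real^'n \<Rightarrow> real^'n^'n \<Rightarrow> real"
    and b :: "real^'n \<Rightarrow> 'a \<Rightarrow> real^'n"
    and c :: "real^'n \<Rightarrow> 'a \<Rightarrow> real"
    and u :: "real^'n \<Rightarrow> real"
  assumes ellip: "\<And>x t p X Q. symmetric_mat X \<Longrightarrow> psd_mat Q \<Longrightarrow>
                   lam * trace Q \<le> F x t p X - F x t p (X + Q) \<and>
                   F x t p X - F x t p (X + Q) \<le> Lam * trace Q"
    and lam_pos: "0 < lam" and lam_le: "lam \<le> Lam"
    and bb: "\<And>R. R > 0 \<Longrightarrow> \<exists>K. \<forall>x \<alpha>. norm x \<le> R \<longrightarrow> norm (b x \<alpha>) \<le> K"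
    and F_inf: "\<And>x t p. ereal (F x t p 0) \<ge> (INF \<alpha>. ereal (c x \<alpha> * t - b x \<alpha> \<bullet> p))"
    and sub: "viscosity_subsolution F u"
    and cu: "\<And>x \<alpha>. c x \<alpha> * u x \<ge> 0"
    and mx: "\<And>x. u x \<le> u xm"
  shows "u yc = u xm"
proof (rule ccontr)
  assume "u yc \<noteq> u xm"
  define M where "M = u xm"
  have yc: "u yc < M" using mx[of yc] \<open>u yc \<noteq> u xm\<close> unfolding M_def by simp
  have usc: "usc u" using sub unfolding viscosity_subsolution_def by simp
  define S where "S = {w. M \<le> u w}"
  have "- S = {w. u w < M}" unfolding S_def by auto
  then have clS: "closed S" using open_below[OF usc, of M] by (simp add: closed_def)
  have "xm \<in> S" unfolding S_def M_def by simp
  then obtain x1 where x1: "x1 \<in> S" "\<And>w. w \<in> S \<Longrightarrow> dist yc x1 \<le> dist yc w"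
    using distance_attains_inf[OF clS, of yc] by blast
  define \<rho> where "\<rho> = dist yc x1"
  have "yc \<noteq> x1" using x1(1) yc unfolding S_def by auto
  then have rho: "\<rho> > 0" unfolding \<rho>_def by simp
  have inball: "u w < M" if "dist yc w < \<rho>" for w
    using x1(2)[of w] that unfolding \<rho>_def S_def by force
  have ux1: "u x1 = M" using x1(1) mx[of x1] unfolding S_def M_def by simp
  have uscf: "\<And>x e. e > 0 \<Longrightarrow> eventually (\<lambda>y. u y < u x + e) (at x)"
    using usc unfolding usc_def by blast
  obtain xi where xi: "xi \<in> sphere yc (\<rho>/2)" "\<And>w. w \<in> sphere yc (\<rho>/2) \<Longrightarrow> u w \<le> u xi"
    using usc_attains_max[OF uscf, of "sphere yc (\<rho>/2)"] rho by auto
  define mi where "mi = u xi"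
  have mi: "mi < M" unfolding mi_def using xi(1) rho by (intro inball) auto
  obtain K where K: "\<And>x \<alpha>. norm x \<le> norm yc + \<rho> \<Longrightarrow> norm (b x \<alpha>) \<le> K"
    using bb[of "norm yc + \<rho>"] rho by (smt (verit) norm_ge_zero)
  define K0 where "K0 = max K 0"
  have K0: "K0 \<ge> 0" "\<And>x \<alpha>. norm x \<le> norm yc + \<rho> \<Longrightarrow> norm (b x \<alpha>) \<le> K0"
    unfolding K0_def using K by (auto simp: le_max_iff_disj)
  define N where "N = real CARD('n)"
  have N1: "N \<ge> 1" unfolding N_def by simp
  define k where "k = 2 * (lam + Lam * N + K0 * \<rho> + 1) / (lam * \<rho>^2)"
  have Lpos: "Lam > 0" using lam_pos lam_le by simp
  have LN: "Lam * N > 0" using Lpos N1 by simp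
  have Kr: "K0 * \<rho> \<ge> 0" using K0 rho by simp
  have kpos: "k > 0" unfolding k_def using lam_pos LN Kr rho by (intro divide_pos_pos) auto
  have krho: "lam * k * \<rho>^2 / 2 = lam + Lam * N + K0 * \<rho> + 1"
    unfolding k_def using lam_pos rho by (simp add: field_simps)
  define \<delta> where "\<delta> = (M - mi) / 2"
  have dpos: "\<delta> > 0" unfolding \<delta>_def using mi by simp
  define g where "g s = - \<delta> * exp (- k * s)" for s
  define g1 where "g1 s = \<delta> * k * exp (- k * s)" for s
  define g2 where "g2 s = - \<delta> * k^2 * exp (- k * s)" for s
  have d1: "(g has_real_derivative g1 s) (at s)" for s
    unfolding g_def g1_def by (auto intro!: derivative_eq_intros simp: algebra_simps)
  have d2: "(g1 has_real_derivative g2 s) (at s)" for s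
    unfolding g1_def g2_def by (auto intro!: derivative_eq_intros simp: algebra_simps power2_eq_square)
  have c2: "continuous_on {0..} g2" unfolding g2_def by (intro continuous_intros)
  define q where "q w = (w - yc) \<bullet> (w - yc)" for w
  have qd: "q w = (dist yc w)^2" for w
    unfolding q_def by (simp add: dot_square_norm dist_norm norm_minus_commute)
  define phi where "phi w = g (q w)" for w
  have C2: "C2_fun phi (\<lambda>x. (2 * g1 (q x)) *\<^sub>R (x-yc))
     (\<lambda>x. (2 * g1 (q x)) *\<^sub>R mat 1 + (4 * g2 (q x)) *\<^sub>R outer (x-yc) (x-yc))"
    unfolding phi_def q_def by (rule radial_C2[OF d1 d2 c2])
  define \<psi> where "\<psi> w = u w - phi w" for w
  have psi: "\<psi> w = u w + \<delta> * exp (- k * (dist yc w)^2)" for w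
    unfolding \<psi>_def phi_def g_def qd by simp
  have contphi: "continuous_on UNIV (\<lambda>w. - phi w)"
    unfolding phi_def g_def q_def by (intro continuous_intros)
  have uscpsi: "\<And>x e. e > 0 \<Longrightarrow> eventually (\<lambda>y. \<psi> y < \<psi> x + e) (at x)"
    unfolding \<psi>_def using usc_add_cont[OF usc contphi] by simp
  define A where "A = cball yc \<rho> - ball yc (\<rho>/2)"
  have x1A: "x1 \<in> A" unfolding A_def \<rho>_def using rho \<rho>_def by auto
  have cA: "compact A" unfolding A_def by (intro compact_diff) auto
  obtain x0 where x0: "x0 \<in> A" "\<And>w. w \<in> A \<Longrightarrow> \<psi> w \<le> \<psi> x0"
    using usc_attains_max[OF uscpsi cA] x1A by blast
  have psix1: "\<psi> x1 = M + \<delta> * exp (- k * \<rho>^2)" using psi[of x1] ux1 unfolding \<rho>_def by simp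
  have outside: "\<psi> w \<le> \<psi> x1" if "dist yc w \<ge> \<rho>" for w
  proof -
    have "\<rho>^2 \<le> (dist yc w)^2" using that rho by (simp add: power_mono)
    then have "exp (- k * (dist yc w)^2) \<le> exp (- k * \<rho>^2)" using kpos by simp
    then have "\<delta> * exp (- k * (dist yc w)^2) \<le> \<delta> * exp (- k * \<rho>^2)" using dpos by simp
    moreover have "u w \<le> M" using mx unfolding M_def by simp
    ultimately show ?thesis using psi[of w] psix1 by simp
  qed
  have inner_lt: "\<psi> w < \<psi> x1" if "dist yc w = \<rho>/2" for w
  proof -
    have "u w \<le> mi" using xi(2)[of w] that unfolding mi_def by (simp add: dist_commute)
    moreover have "exp (- k * (dist yc w)^2) \<le> 1" using kpos by simp
    then have "\<delta> * exp (- k * (dist yc w)^2) \<le> \<delta>" using dpos by (simp add: mult_left_le)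
    moreover have "0 < \<delta> * exp (- k * \<rho>^2)" using dpos by simp
    moreover have "mi + \<delta> < M" unfolding \<delta>_def using mi by (simp add: field_simps)
    ultimately show ?thesis using psi[of w] psix1 by linarith
  qed
  have ge: "\<psi> x0 \<ge> \<psi> x1" using x0(2)[OF x1A] .
  have dx0: "\<rho>/2 < dist yc x0" "dist yc x0 \<le> \<rho>"
  proof -
    have "dist yc x0 \<noteq> \<rho>/2" using inner_lt[of x0] ge by auto
    then show "\<rho>/2 < dist yc x0" "dist yc x0 \<le> \<rho>" using x0(1) unfolding A_def by (auto simp: dist_commute)
  qed
  have locmax: "\<exists>r>0. \<forall>w\<in>ball x0 r. u w - phi w \<le> u x0 - phi x0"
  proof (intro exI[of _ "dist yc x0 - \<rho>/2"] conjI ballI)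
    show "dist yc x0 - \<rho>/2 > 0" using dx0 by simp
    fix w assume "w \<in> ball x0 (dist yc x0 - \<rho>/2)"
    then have "dist x0 w < dist yc x0 - \<rho>/2" by simp
    moreover have "dist yc x0 \<le> dist yc w + dist w x0" by (rule dist_triangle)
    ultimately have wd: "dist yc w > \<rho>/2" by (simp add: dist_commute)
    show "u w - phi w \<le> u x0 - phi x0"
    proof (cases "dist yc w \<le> \<rho>")
      case True
      then have "w \<in> A" using wd unfolding A_def by (auto simp: dist_commute)
      then show ?thesis using x0(2) unfolding \<psi>_def by blast
    next
      case False
      then show ?thesis using outside[of w] ge unfolding \<psi>_def by simp
    qed
  qed
  define z where "z = x0 - yc"
  define s where "s = z \<bullet> z"
  define E where "E = exp (- k * s)"
  have sd: "s = (dist yc x0)^2" unfolding s_def z_def using qd[of x0] q_def by simp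
  have nz: "norm z = dist yc x0" unfolding z_def by (simp add: dist_norm norm_minus_commute)
  have s_lo: "s \<ge> \<rho>^2/4"
  proof -
    have "(\<rho>/2)^2 \<le> (dist yc x0)^2" using dx0 rho by (intro power_mono) auto
    then show ?thesis unfolding sd by (simp add: power_divide)
  qed
  have spos: "s > 0" using s_lo rho by (smt (verit) zero_less_power divide_pos_pos)
  have Epos: "E > 0" unfolding E_def by simp
  define a where "a = 2 * g1 s"
  define bq where "bq = 4 * g2 s"
  have a_eq: "a = 2 * \<delta> * k * E" unfolding a_def g1_def E_def by simp
  have bq_eq: "bq = - 4 * \<delta> * k^2 * E" unfolding bq_def g2_def E_def by simp
  have apos: "a > 0" unfolding a_eq using dpos kpos Epos by simp
  have ks: "2 * lam * k * s \<ge> lam + Lam * N + K0 * \<rho> + 1"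
  proof -
    have "lam * k * \<rho>^2 / 2 \<le> 2 * lam * k * s"
      using s_lo lam_pos kpos by (simp add: field_simps mult_left_mono)
    then show ?thesis using krho by simp
  qed
  have ks1: "2 * k * s \<ge> 1"
  proof -
    have "lam \<le> lam + Lam * N + K0 * \<rho> + 1" using LN Kr by simp
    then have "lam * 1 \<le> lam * (2 * k * s)" using ks by (simp add: algebra_simps)
    then show ?thesis using lam_pos by simp
  qed
  have abq: "a + bq * s \<le> 0"
  proof -
    have "a + bq * s = 2 * \<delta> * k * E * (1 - 2 * k * s)" unfolding a_eq bq_eq by (simp add: algebra_simps power2_eq_square)
    moreover have "2 * \<delta> * k * E \<ge> 0" using dpos kpos Epos by simp
    ultimately show ?thesis using ks1 by (simp add: mult_nonpos_nonneg mult_nonneg_nonpos)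
  qed
  define p where "p = a *\<^sub>R z"
  define X where "X = a *\<^sub>R mat 1 + bq *\<^sub>R outer z z"
  have test: "F x0 (u x0) p X \<le> 0"
    using sub C2 locmax unfolding viscosity_subsolution_def p_def X_def a_def bq_def s_def z_def q_def
    by blast
  have P1: "F x0 (u x0) p X \<ge> F x0 (u x0) p 0 - Lam * a * (N - 1) - lam * (a + bq * s)"
    unfolding X_def N_def s_def by (rule radial_pucci[of lam F Lam, OF ellip]) (use spos apos abq s_def in auto)
  have nx0: "norm x0 \<le> norm yc + \<rho>"
    using norm_triangle_ineq[of yc z] nz dx0 unfolding z_def by simp
  have P2: "F x0 (u x0) p 0 \<ge> - K0 * (a * norm z)"
  proof (rule drift[where F=F and x=x0 and t="u x0" and p=p and c=c and b=b, OF F_inf])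
    fix \<alpha>
    have "b x0 \<alpha> \<bullet> p \<le> norm (b x0 \<alpha>) * norm p" by (rule norm_cauchy_schwarz)
    also have "\<dots> \<le> K0 * (a * norm z)"
      unfolding p_def using K0(2)[OF nx0, of \<alpha>] apos by (simp add: mult_right_mono)
    finally show "c x0 \<alpha> * u x0 - b x0 \<alpha> \<bullet> p \<ge> - K0 * (a * norm z)" using cu[of x0 \<alpha>] by simp
  qed
  have "norm z \<le> \<rho>" using nz dx0 by simp
  then have Kz: "K0 * norm z \<le> K0 * \<rho>" using K0 by (simp add: mult_left_mono)
  have "F x0 (u x0) p X \<ge> a * (2 * lam * k * s - lam - Lam * (N - 1) - K0 * norm z)"
  proof -
    have "- lam * (a + bq * s) = a * (2 * lam * k * s) - lam * a"
      unfolding a_eq bq_eq by (simp add: algebra_simps power2_eq_square)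
    then show ?thesis using P1 P2 by (simp add: algebra_simps)
  qed
  moreover have "2 * lam * k * s - lam - Lam * (N - 1) - K0 * norm z > 0"
  proof -
    have "Lam * (N - 1) = Lam * N - Lam" by (simp add: algebra_simps)
    then show ?thesis using ks Kz Lpos by linarith
  qed
  ultimately have "F x0 (u x0) p X > 0" using apos by (smt (verit) mult_pos_pos)
  then show False using test by simp
qed



definition G1 :: "real \<Rightarrow> real" where "G1 s = ln (1+s)/2 - inverse (1+s)"
definition g1 :: "real \<Rightarrow> real" where "g1 s = inverse (1+s)/2 + inverse (1+s)^2"
definition g2 :: "real \<Rightarrow> real" where "g2 s = - (inverse (1+s)^2)/2 - 2 * inverse (1+s)^3"

lemma G_derivs:
  assumes "s \<ge> (0::real)"
  shows "(G1 has_real_derivative g1 s) (at s)" "(g1 has_real_derivative g2 s) (at s)"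
proof -
  have p: "1 + s \<noteq> 0" "1 + s > 0" using assms by auto
  have d0: "((\<lambda>s. 1 + s) has_real_derivative 1) (at s)"
    using DERIV_add[OF DERIV_const[of 1] DERIV_ident] by simp
  have a: "((\<lambda>s. ln (1+s)) has_real_derivative inverse (1+s)) (at s)"
    using DERIV_chain2[OF DERIV_ln[OF p(2)] d0] by simp
  have b0: "((\<lambda>s. inverse (1+s)) has_real_derivative - (1 * inverse ((1+s) ^ Suc (Suc 0)))) (at s)"
    by (rule DERIV_inverse_fun[OF d0 p(1)])
  have b: "((\<lambda>s. inverse (1+s)) has_real_derivative - (inverse (1+s)^2)) (at s)"
    using b0 by (simp add: power2_eq_square inverse_mult_distrib)
  have c0: "((\<lambda>s. inverse (1+s) ^ 2) has_real_derivative of_nat 2 * (- (inverse (1+s)^2) * inverse (1+s) ^ (2 - Suc 0))) (at s)"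
    by (rule DERIV_power[OF b])
  have c: "((\<lambda>s. inverse (1+s) ^ 2) has_real_derivative - 2 * inverse (1+s)^3) (at s)"
    using c0 by (simp add: power2_eq_square power3_eq_cube)
  have "((\<lambda>s. ln (1+s)/2 - inverse (1+s)) has_real_derivative inverse (1+s)/2 - (- (inverse (1+s)^2))) (at s)"
    by (intro DERIV_diff DERIV_cdivide a b)
  then show "(G1 has_real_derivative g1 s) (at s)" unfolding G1_def g1_def by (simp add: fun_eq_iff)
  have "((\<lambda>s. inverse (1+s)/2 + inverse (1+s)^2) has_real_derivative (- (inverse (1+s)^2))/2 + (- 2 * inverse (1+s)^3)) (at s)"
    by (intro DERIV_add DERIV_cdivide b c)
  then show "(g1 has_real_derivative g2 s) (at s)" unfolding g1_def g2_def by (simp add: fun_eq_iff)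
qed

lemma g2_cont: "continuous_on {0..} g2"
  unfolding g2_def by (intro continuous_intros) auto

lemma g1_pos: "s \<ge> 0 \<Longrightarrow> g1 s > 0"
  unfolding g1_def by (simp add: add_pos_nonneg)

lemma alg_id:
  assumes "s \<ge> 0"
  shows "(2 * g1 s + 4 * g2 s * s) * (1+s)^3 = 3 - 6 * s - s^2"
    "(g1 s + s * g2 s) * (2 * (1+s)^3) = 3 - s"
    "(2 * g1 s * s - 1) * (1+s)^2 = s - 1"
proof -
  define i where "i = inverse (1+s)"
  have ti: "(1+s) * i = 1" unfolding i_def using assms by simp
  show "(2 * g1 s + 4 * g2 s * s) * (1+s)^3 = 3 - 6 * s - s^2"
    unfolding g1_def g2_def i_def[symmetric] using ti by algebra
  show "(g1 s + s * g2 s) * (2 * (1+s)^3) = 3 - s"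
    unfolding g1_def g2_def i_def[symmetric] using ti by algebra
  show "(2 * g1 s * s - 1) * (1+s)^2 = s - 1"
    unfolding g1_def i_def[symmetric] using ti by algebra
qed

lemma alg_ab: assumes "s \<ge> 1" shows "2 * g1 s + 4 * g2 s * s \<le> 0"
proof (rule ccontr)
  assume "\<not> ?thesis"
  then have "2 * g1 s + 4 * g2 s * s > 0" by simp
  moreover have "(1+s)^3 > 0" using assms by simp
  ultimately have "(2 * g1 s + 4 * g2 s * s) * (1+s)^3 > 0" by (rule mult_pos_pos)
  then have "3 - 6 * s - s^2 > 0" using alg_id(1)[of s] assms by simp
  moreover have "s * s \<ge> 0" by simp
  ultimately show False unfolding power2_eq_square using assms by linarith
qed

lemma alg_strict: assumes "s > 3" shows "g1 s + s * g2 s < 0"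
proof (rule ccontr)
  assume "\<not> ?thesis"
  then have "g1 s + s * g2 s \<ge> 0" by simp
  moreover have "2 * (1+s)^3 \<ge> 0" using assms by simp
  ultimately have "(g1 s + s * g2 s) * (2 * (1+s)^3) \<ge> 0" by (rule mult_nonneg_nonneg)
  then have "3 - s \<ge> 0" using alg_id(2)[of s] assms by simp
  then show False using assms by simp
qed



lemma ball_bound:
  fixes F :: "real^'n \<Rightarrow> real \<Rightarrow> real^'n \<Rightarrow> real^'n^'n \<Rightarrow> real"
    and b :: "real^'n \<Rightarrow> 'a \<Rightarrow> real^'n"
    and c :: "real^'n \<Rightarrow> 'a \<Rightarrow> real"
    and u :: "real^'n \<Rightarrow> real"
  assumes ellip: "\<And>x t p X Q. symmetric_mat X \<Longrightarrow> psd_mat Q \<Longrightarrow>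
                   lam * trace Q \<le> F x t p X - F x t p (X + Q) \<and>
                   F x t p X - F x t p (X + Q) \<le> Lam * trace Q"
    and lam_pos: "0 < lam" and lam_le: "lam \<le> Lam"
    and Ro: "Ro > 0"
    and lyap: "\<And>x \<alpha>. norm x \<ge> Ro \<Longrightarrow>
        b x \<alpha> \<bullet> x - c x \<alpha> * (norm x)^2 * ln (norm x) \<le> lam - (real CARD('n) - 1) * Lam"
    and F_inf: "\<And>x t p. ereal (F x t p 0) \<ge> (INF \<alpha>. ereal (c x \<alpha> * t - b x \<alpha> \<bullet> p))"
    and sub: "viscosity_subsolution F u"
    and growth: "\<And>e. e > 0 \<Longrightarrow> \<exists>B. \<forall>x. norm x \<ge> B \<longrightarrow> u x < e * ln (norm x)"
    and c_nonneg: "\<And>x \<alpha>. c x \<alpha> \<ge> 0"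
    and alt: "(\<forall>x \<alpha>. c x \<alpha> = 0) \<or> (\<forall>x. u x \<ge> 0)"
  shows "\<exists>xm. \<forall>x. u x \<le> u xm"
proof -
  have usc: "usc u" using sub unfolding viscosity_subsolution_def by simp
  have uscf: "\<And>x e. e > 0 \<Longrightarrow> eventually (\<lambda>y. u y < u x + e) (at x)"
    using usc unfolding usc_def by blast
  define R1 where "R1 = max Ro 2"
  have R1: "R1 \<ge> Ro" "R1 \<ge> 2" unfolding R1_def by auto
  define S1 where "S1 = R1^2"
  obtain xm where xm: "xm \<in> cball 0 R1" "\<And>y. y \<in> cball 0 R1 \<Longrightarrow> u y \<le> u xm"
    using usc_attains_max[OF uscf, of "cball 0 R1"] R1 by auto
  define m where "m = u xm"
  define N where "N = real CARD('n)"
  have Lpos: "Lam > 0" using lam_pos lam_le by simp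
  have LS1: "ln (1 + S1) \<ge> 0" unfolding S1_def by simp
  have claim: "u x \<le> m + \<delta> + \<epsilon> * (G1 (x \<bullet> x) - G1 S1)"
    if dpos: "\<delta> > 0" and epos: "\<epsilon> > 0" and de: "\<epsilon> * (ln (1+S1)/2 + 2) \<le> \<delta>" and nx: "norm x \<ge> R1" for x \<delta> \<epsilon>
  proof (rule ccontr)
    assume contra: "\<not> ?thesis"
    define gg where "gg s = m + \<delta> + \<epsilon> * (G1 s - G1 S1)" for s
    define w where "w (y::real^'n) = gg (y \<bullet> y)" for y
    have d1: "(gg has_real_derivative \<epsilon> * g1 s) (at s)" if "s \<ge> 0" for s
    proof -
      have "((\<lambda>s. m + \<delta> + \<epsilon> * (G1 s - G1 S1)) has_real_derivative 0 + \<epsilon> * (g1 s - 0)) (at s)"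
        by (intro DERIV_add DERIV_cmult DERIV_diff G_derivs(1)[OF that] DERIV_const)
      then show ?thesis unfolding gg_def by simp
    qed
    have d2: "((\<lambda>s. \<epsilon> * g1 s) has_real_derivative \<epsilon> * g2 s) (at s)" if "s \<ge> 0" for s
      by (intro DERIV_cmult G_derivs(2)[OF that])
    have c2: "continuous_on {0..} (\<lambda>s. \<epsilon> * g2 s)"
      by (intro continuous_intros g2_cont)
    have C2: "C2_fun w (\<lambda>x. (2 * (\<epsilon> * g1 (x \<bullet> x))) *\<^sub>R x)
       (\<lambda>x. (2 * (\<epsilon> * g1 (x \<bullet> x))) *\<^sub>R mat 1 + (4 * (\<epsilon> * g2 (x \<bullet> x))) *\<^sub>R outer x x)"
      using radial_C2[of gg "\<lambda>s. \<epsilon> * g1 s" "\<lambda>s. \<epsilon> * g2 s" 0, OF d1 d2 c2]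
      unfolding w_def by simp
    define \<psi> where "\<psi> y = u y - w y" for y
    have contw: "continuous_on UNIV (\<lambda>y. - w y)"
    proof -
      have "continuous_on UNIV w" using C2 unfolding C2_fun_def
        by (meson continuous_on_eq_continuous_at has_derivative_continuous open_UNIV)
      then show ?thesis by (intro continuous_intros)
    qed
    have uscpsi: "\<And>x e. e > 0 \<Longrightarrow> eventually (\<lambda>y. \<psi> y < \<psi> x + e) (at x)"
      unfolding \<psi>_def using usc_add_cont[OF usc contw] by simp
    have wlow: "w y \<ge> m + \<delta> + \<epsilon> * (ln (norm y) - 1) - \<epsilon> * G1 S1" if "norm y \<ge> 1" for y
    proof -
      have ny: "norm y > 0" using that by linarith
      have "ln (y \<bullet> y) = 2 * ln (norm y)"
        using ny by (simp add: dot_square_norm ln_realpow)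
      moreover have "ln (y \<bullet> y) \<le> ln (1 + y \<bullet> y)"
      proof -
        have yy: "y \<bullet> y > 0" using ny by (simp add: dot_square_norm)
        moreover have y1: "1 + y \<bullet> y > 0" using yy by linarith
        ultimately show ?thesis using ln_le_cancel_iff[OF yy y1] by linarith
      qed
      moreover have "inverse (1 + y \<bullet> y) \<le> 1" by (simp add: inverse_le_1_iff)
      ultimately have "G1 (y \<bullet> y) \<ge> ln (norm y) - 1" unfolding G1_def by simp
      then have "\<epsilon> * G1 (y \<bullet> y) \<ge> \<epsilon> * (ln (norm y) - 1)" using epos by (simp add: mult_left_mono)
      then show ?thesis unfolding w_def gg_def by (simp add: algebra_simps)
    qed
    obtain B where B: "\<And>y. norm y \<ge> B \<Longrightarrow> u y < (\<epsilon>/4) * ln (norm y)"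
      using growth[of "\<epsilon>/4"] epos by auto
    define C1 where "C1 = m + \<delta> - \<epsilon> - \<epsilon> * G1 S1"
    define R2 where "R2 = max (max (norm x + 1) (max B (R1 + 1))) (exp (4 * \<bar>C1\<bar> / (3 * \<epsilon>)))"
    have R2: "R2 \<ge> norm x + 1" "R2 \<ge> B" "R2 \<ge> R1 + 1" "R2 \<ge> exp (4 * \<bar>C1\<bar> / (3 * \<epsilon>))"
      unfolding R2_def by auto
    have far: "\<psi> y < 0" if "norm y \<ge> R2" for y
    proof -
      have ny1: "norm y \<ge> 1" using that R2 R1 by simp
      have en: "exp (4 * \<bar>C1\<bar> / (3 * \<epsilon>)) \<le> norm y" using that R2(4) by linarith
      have np: "norm y > 0" using ny1 by linarith
      have "ln (norm y) \<ge> ln (exp (4 * \<bar>C1\<bar> / (3 * \<epsilon>)))"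
        using ln_le_cancel_iff[OF exp_gt_zero np] en by blast
      then have "ln (norm y) \<ge> 4 * \<bar>C1\<bar> / (3 * \<epsilon>)" by simp
      then have "3 * \<epsilon> * ln (norm y) \<ge> 4 * \<bar>C1\<bar>" using epos by (simp add: field_simps)
      then have "(\<epsilon>/4) * ln (norm y) \<le> C1 + \<epsilon> * ln (norm y)" by (simp add: field_simps)
      moreover have "u y < (\<epsilon>/4) * ln (norm y)" using B that R2 by simp
      moreover have "w y \<ge> C1 + \<epsilon> * ln (norm y)" using wlow[OF ny1] unfolding C1_def by (simp add: algebra_simps)
      ultimately show ?thesis unfolding \<psi>_def by simp
    qed
    define A where "A = cball (0::real^'n) R2 - ball 0 R1"
    have xA: "x \<in> A" unfolding A_def using nx R2 by simp
    have cA: "compact A" unfolding A_def by (intro compact_diff) auto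
    obtain x0 where x0: "x0 \<in> A" "\<And>y. y \<in> A \<Longrightarrow> \<psi> y \<le> \<psi> x0"
      using usc_attains_max[OF uscpsi cA] xA by blast
    have psix: "\<psi> x > 0" using contra unfolding \<psi>_def w_def gg_def by simp
    have px0: "\<psi> x0 > 0" using x0(2)[OF xA] psix by simp
    have "norm x0 \<noteq> R1"
    proof
      assume h: "norm x0 = R1"
      then have "u x0 \<le> m" using xm(2)[of x0] unfolding m_def by simp
      moreover have "x0 \<bullet> x0 = S1" unfolding S1_def using h by (simp add: dot_square_norm)
      ultimately have "\<psi> x0 \<le> - \<delta>" unfolding \<psi>_def w_def gg_def by simp
      then show False using px0 dpos by simp
    qed
    then have n0lo: "norm x0 > R1" using x0(1) unfolding A_def by auto
    have n0hi: "norm x0 < R2" using far[of x0] px0 by force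
    have locmax: "\<exists>r>0. \<forall>y\<in>ball x0 r. u y - w y \<le> u x0 - w x0"
    proof (intro exI[of _ "min (norm x0 - R1) (R2 - norm x0)"] conjI ballI)
      show "min (norm x0 - R1) (R2 - norm x0) > 0" using n0lo n0hi by simp
      fix y assume "y \<in> ball x0 (min (norm x0 - R1) (R2 - norm x0))"
      then have d: "norm (x0 - y) < min (norm x0 - R1) (R2 - norm x0)" by (simp add: dist_norm)
      have "\<bar>norm x0 - norm y\<bar> \<le> norm (x0 - y)" by (rule norm_triangle_ineq3)
      then have "y \<in> A" using d unfolding A_def by auto
      then show "u y - w y \<le> u x0 - w x0" using x0(2) unfolding \<psi>_def by blast
    qed
    define s where "s = x0 \<bullet> x0"
    define nr where "nr = norm x0"
    have s_nr: "s = nr^2" unfolding s_def nr_def by (simp add: dot_square_norm)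
    have nr2: "nr \<ge> 2" using n0lo R1 unfolding nr_def by simp
    have "2 * 2 \<le> nr * nr" using nr2 by (intro mult_mono) auto
    then have s4: "s \<ge> 4" unfolding s_nr by (simp add: power2_eq_square)
    have spos: "s > 0" using s4 by simp
    define a where "a = 2 * (\<epsilon> * g1 s)"
    define bq where "bq = 4 * (\<epsilon> * g2 s)"
    have apos: "a > 0" unfolding a_def using epos g1_pos[of s] spos by simp
    have abq: "a + bq * s \<le> 0"
    proof -
      have "a + bq * s = \<epsilon> * (2 * g1 s + 4 * g2 s * s)" unfolding a_def bq_def by (simp add: algebra_simps)
      moreover have "2 * g1 s + 4 * g2 s * s \<le> 0" using alg_ab[of s] s4 by simp
      ultimately show ?thesis using epos by (simp add: mult_nonneg_nonpos)
    qed
    define p where "p = a *\<^sub>R x0"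
    define X where "X = a *\<^sub>R mat 1 + bq *\<^sub>R outer x0 x0"
    have test: "F x0 (u x0) p X \<le> 0"
      using sub C2 locmax unfolding viscosity_subsolution_def p_def X_def a_def bq_def s_def
      by blast
    have P1: "F x0 (u x0) p X \<ge> F x0 (u x0) p 0 - Lam * a * (N - 1) - lam * (a + bq * s)"
      unfolding X_def N_def s_def by (rule radial_pucci[of lam F Lam, OF ellip]) (use spos apos abq s_def in auto)
    define L0 where "L0 = lam - (N - 1) * Lam"
    have lnr: "0 \<le> ln nr" "ln nr \<le> s"
    proof -
      show "0 \<le> ln nr" using nr2 by simp
      have "ln nr \<le> nr - 1" using nr2 by (intro ln_le_minus_one) simp
      also have "\<dots> \<le> s"
      proof -
        have "nr * 1 \<le> nr * nr" using nr2 by (intro mult_left_mono) auto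
        then show ?thesis unfolding s_nr power2_eq_square by linarith
      qed
      finally show "ln nr \<le> s" .
    qed
    have tbig: "c x0 \<alpha> * (u x0 - a * s * ln nr) \<ge> 0" for \<alpha>
    proof (cases "\<forall>x \<alpha>. c x \<alpha> = 0")
      case True then show ?thesis by simp
    next
      case False
      then have u0: "\<forall>x. u x \<ge> 0" using alt by blast
      have m0: "m \<ge> 0" unfolding m_def using u0 by simp
      define d where "d = 2 * g1 s * s - 1"
      have dd: "d * (1+s)^2 = s - 1" unfolding d_def using alg_id(3)[of s] s4 by simp
      have as_eq: "a * s = \<epsilon> * (1 + d)" unfolding a_def d_def by (simp add: algebra_simps)
      have dl: "d * ln nr \<le> 1"
      proof -
        have "(s - 1) * ln nr \<le> s * s" using lnr s4 by (intro mult_mono) auto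
        also have "\<dots> \<le> (1+s)^2" using s4 by (simp add: power2_eq_square algebra_simps)
        finally have le1: "(s - 1) * ln nr \<le> (1+s)^2" .
        have eq1: "(d * ln nr) * (1+s)^2 = (s - 1) * ln nr"
        proof -
          have "(d * ln nr) * (1+s)^2 = (d * (1+s)^2) * ln nr" by (simp only: mult_ac)
          then show ?thesis using dd by simp
        qed
        have "(d * ln nr) * (1+s)^2 \<le> (1+s)^2" unfolding eq1 by (rule le1)
        then have "(d * ln nr) * (1+s)^2 \<le> 1 * (1+s)^2" by simp
        moreover have "(1+s)^2 > 0" using s4 by simp
        ultimately show ?thesis by (rule mult_right_le_imp_le)
      qed
      have as: "a * s * ln nr \<le> \<epsilon> * ln nr + \<epsilon>"
      proof -
        have "a * s * ln nr = \<epsilon> * ln nr + \<epsilon> * (d * ln nr)" using as_eq by (simp add: algebra_simps)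
        moreover have "\<epsilon> * (d * ln nr) \<le> \<epsilon>" using dl epos by (simp add: mult_left_le)
        ultimately show ?thesis by simp
      qed
      have G1S1: "G1 S1 \<le> ln (1+S1)/2" unfolding G1_def S1_def by simp
      have "w x0 \<ge> m + \<delta> + \<epsilon> * (ln nr - 1) - \<epsilon> * G1 S1" using wlow[of x0] nr2 unfolding nr_def by simp
      moreover have "\<epsilon> * G1 S1 \<le> \<epsilon> * (ln (1+S1)/2)" using G1S1 epos by (simp add: mult_left_mono)
      ultimately have "w x0 \<ge> \<epsilon> * ln nr + \<epsilon>" using m0 de by (simp add: algebra_simps)
      moreover have "u x0 > w x0" using px0 unfolding \<psi>_def by simp
      ultimately have "u x0 - a * s * ln nr \<ge> 0" using as by simp
      then show ?thesis using c_nonneg by simp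
    qed
    have P2: "F x0 (u x0) p 0 \<ge> - a * L0"
    proof (rule drift[where F=F and x=x0 and t="u x0" and p=p and c=c and b=b, OF F_inf])
      fix \<alpha>
      have "b x0 \<alpha> \<bullet> x0 \<le> L0 + c x0 \<alpha> * s * ln nr"
        using lyap[of x0 \<alpha>] n0lo R1 unfolding L0_def N_def s_nr nr_def by (simp add: algebra_simps)
      then have "a * (b x0 \<alpha> \<bullet> x0) \<le> a * (L0 + c x0 \<alpha> * s * ln nr)" using apos by (simp add: mult_left_mono)
      moreover have "b x0 \<alpha> \<bullet> p = a * (b x0 \<alpha> \<bullet> x0)" unfolding p_def by simp
      ultimately show "c x0 \<alpha> * u x0 - b x0 \<alpha> \<bullet> p \<ge> - a * L0"
        using tbig[of \<alpha>] by (simp add: algebra_simps)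
    qed
    have "F x0 (u x0) p X \<ge> - lam * (2 * a + bq * s)"
      using P1 P2 unfolding L0_def by (simp add: algebra_simps)
    moreover have "2 * a + bq * s < 0"
    proof -
      have "2 * a + bq * s = 4 * \<epsilon> * (g1 s + s * g2 s)" unfolding a_def bq_def by (simp add: algebra_simps)
      moreover have "g1 s + s * g2 s < 0" using alg_strict[of s] s4 by simp
      ultimately show ?thesis using epos by (simp add: mult_pos_neg)
    qed
    moreover have "lam * (2 * a + bq * s) < 0" using calculation(2) by (rule mult_pos_neg[OF lam_pos])
    ultimately have "F x0 (u x0) p X > 0" by linarith
    then show False using test by simp
  qed
  have "u x \<le> m" for x
  proof (cases "norm x \<le> R1")
    case True then show ?thesis using xm(2)[of x] unfolding m_def by simp
  next
    case False
    then have nx: "norm x \<ge> R1" by simp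
    show ?thesis
    proof (rule field_le_epsilon)
      fix e :: real assume e: "e > 0"
      define \<delta> where "\<delta> = e / 2"
      define D where "D = G1 (x \<bullet> x) - G1 S1"
      define Q where "Q = ln (1+S1)/2 + 2"
      have Qp: "Q > 0" unfolding Q_def using LS1 by simp
      define \<epsilon> where "\<epsilon> = min (\<delta> / Q) (\<delta> / (\<bar>D\<bar> + 1))"
      have dp: "\<delta> > 0" unfolding \<delta>_def using e by simp
      have ep: "\<epsilon> > 0" unfolding \<epsilon>_def using dp Qp by simp
      have "\<epsilon> * Q \<le> \<delta> / Q * Q" using Qp unfolding \<epsilon>_def by (intro mult_right_mono) auto
      then have eQ: "\<epsilon> * Q \<le> \<delta>" using Qp by simp
      have "\<epsilon> * D \<le> \<epsilon> * (\<bar>D\<bar> + 1)" using ep by (intro mult_left_mono) auto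
      also have "\<dots> \<le> \<delta> / (\<bar>D\<bar> + 1) * (\<bar>D\<bar> + 1)" unfolding \<epsilon>_def by (intro mult_right_mono) auto
      also have "\<dots> = \<delta>" by simp
      finally have eD: "\<epsilon> * D \<le> \<delta>" .
      have "u x \<le> m + \<delta> + \<epsilon> * D" unfolding D_def using claim[OF dp ep _ nx] eQ unfolding Q_def by simp
      then show "u x \<le> m + e" using eD unfolding \<delta>_def by simp
    qed
  qed
  then show ?thesis unfolding m_def by blast
qed



theorem corollary3p1:
  fixes F :: "real^'n \<Rightarrow> real \<Rightarrow> real^'n \<Rightarrow> real^'n^'n \<Rightarrow> real"
    and b :: "real^'n \<Rightarrow> 'a::metric_space \<Rightarrow> real^'n"
    and c :: "real^'n \<Rightarrow> 'a \<Rightarrow> real"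
    and u :: "real^'n \<Rightarrow> real"
    and lam Lam :: real
  assumes F_cont: "continuous_on (UNIV \<times> UNIV \<times> UNIV \<times> {X. symmetric_mat X})
                      (\<lambda>(x, t, p, X). F x t p X)"
    and lam_pos: "0 < lam" and lam_le: "lam \<le> Lam"
    and ellip: "\<And>x t p X Q. symmetric_mat X \<Longrightarrow> psd_mat Q \<Longrightarrow>
                   lam * trace Q \<le> F x t p X - F x t p (X + Q) \<and>
                   F x t p X - F x t p (X + Q) \<le> Lam * trace Q"
    and b_cont: "continuous_on UNIV (\<lambda>(x, \<alpha>). b x \<alpha>)"
    and c_cont: "continuous_on UNIV (\<lambda>(x, \<alpha>). c x \<alpha>)"
    and bc_bound: "\<And>R. R > 0 \<Longrightarrow> \<exists>K.
                     (\<forall>x \<alpha>. norm x \<le> R \<longrightarrow> norm (b x \<alpha>) + \<bar>c x \<alpha>\<bar> \<le> K) \<and>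
                     (\<forall>x y \<alpha>. norm x \<le> R \<longrightarrow> norm y \<le> R \<longrightarrow>
                        norm (b x \<alpha> - b y \<alpha>) \<le> K * norm (x - y))"
    and c_nonneg: "\<And>x \<alpha>. c x \<alpha> \<ge> 0"
    and c_unif: "\<And>R e. R > 0 \<Longrightarrow> e > 0 \<Longrightarrow> \<exists>d>0. \<forall>x y \<alpha>.
                   norm x \<le> R \<longrightarrow> norm y \<le> R \<longrightarrow> norm (x - y) < d \<longrightarrow>
                   \<bar>c x \<alpha> - c y \<alpha>\<bar> < e"
    and lyap: "\<exists>Ro>0. \<forall>x. norm x \<ge> Ro \<longrightarrow>
                 (SUP \<alpha>. ereal (b x \<alpha> \<bullet> x - c x \<alpha> * (norm x)\<^sup>2 * ln (norm x)))
                   \<le> ereal (lam - (real CARD('n) - 1) * Lam)"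
    and F_inf: "\<And>x t p. ereal (F x t p 0) \<ge> (INF \<alpha>. ereal (c x \<alpha> * t - b x \<alpha> \<bullet> p))"
    and sub: "viscosity_subsolution F u"
    and growth: "Limsup at_infinity (\<lambda>x. ereal (u x / ln (norm x))) \<le> 0"
    and alt: "(\<forall>x \<alpha>. c x \<alpha> = 0) \<or> (\<forall>x. u x \<ge> 0)"
  shows "\<exists>k. \<forall>x. u x = k"
proof -
  obtain Ro where Ro: "Ro > 0" and Rl: "\<And>x. norm x \<ge> Ro \<Longrightarrow>
      (SUP \<alpha>. ereal (b x \<alpha> \<bullet> x - c x \<alpha> * (norm x)\<^sup>2 * ln (norm x))) \<le> ereal (lam - (real CARD('n) - 1) * Lam)"
    using lyap by blast
  have lyap': "b x \<alpha> \<bullet> x - c x \<alpha> * (norm x)^2 * ln (norm x) \<le> lam - (real CARD('n) - 1) * Lam"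
    if "norm x \<ge> Ro" for x \<alpha>
  proof -
    have "ereal (b x \<alpha> \<bullet> x - c x \<alpha> * (norm x)\<^sup>2 * ln (norm x)) \<le>
        (SUP \<alpha>. ereal (b x \<alpha> \<bullet> x - c x \<alpha> * (norm x)\<^sup>2 * ln (norm x)))"
      by (rule SUP_upper) simp
    also have "\<dots> \<le> ereal (lam - (real CARD('n) - 1) * Lam)" using Rl[OF that] .
    finally show ?thesis by simp
  qed
  have growth': "\<exists>B. \<forall>x. norm x \<ge> B \<longrightarrow> u x < e * ln (norm x)" if e: "e > 0" for e
  proof -
    have "Limsup at_infinity (\<lambda>x. ereal (u x / ln (norm x))) < ereal e" using growth e
      by (meson ereal_less(2) order_le_less_trans)
    then have "eventually (\<lambda>x. ereal (u x / ln (norm x)) < ereal e) at_infinity"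
      by (rule Limsup_lessD)
    then obtain B where B: "\<And>x. B \<le> norm x \<Longrightarrow> u x / ln (norm x) < e"
      unfolding eventually_at_infinity by auto
    show ?thesis
    proof (intro exI[of _ "max B 2"] allI impI)
      fix x :: "real^'n" assume "max B 2 \<le> norm x"
      then have x: "B \<le> norm x" "2 \<le> norm x" by auto
      then have "ln (norm x) > 0" by (intro ln_gt_zero) linarith
      with B[OF x(1)] show "u x < e * ln (norm x)" by (simp add: divide_less_eq mult.commute)
    qed
  qed
  have bb: "\<exists>K. \<forall>x \<alpha>. norm x \<le> R \<longrightarrow> norm (b x \<alpha>) \<le> K" if R: "R > 0" for R
  proof -
    obtain K where K: "\<forall>x \<alpha>. norm x \<le> R \<longrightarrow> norm (b x \<alpha>) + \<bar>c x \<alpha>\<bar> \<le> K"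
      using bc_bound[OF R] by blast
    show ?thesis by (rule exI[of _ K]) (use K in \<open>smt (verit) abs_ge_zero\<close>)
  qed
  have cu: "c x \<alpha> * u x \<ge> 0" for x \<alpha>
    using alt c_nonneg by (metis mult_eq_0_iff mult_nonneg_nonneg order_refl)
  obtain xm where xm: "\<forall>x. u x \<le> u xm"
    using ball_bound[of lam F Lam Ro b c u, OF ellip lam_pos lam_le Ro lyap' F_inf sub growth' c_nonneg alt]
    by blast
  have mx: "\<And>x. u x \<le> u xm" using xm by blast
  have "u x = u xm" for x
    by (rule smp[of lam F Lam b c u, OF ellip lam_pos lam_le bb F_inf sub cu mx])
  then show ?thesis by blast
qed

end
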